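(* Let $L_1,L_2>0$, $N_{\max}\ge1$, $M>0$, $\bar c\in(0,1)$, and let $t^*$ be the unique positive solution of $e^{L_2t^*}-\big(L_2+\frac{L_2^2}{L_1\sqrt{N_{\max}}}\big)t^*-1=0$. Define $$\bar t:=\sup\Big\{t>0:\ e^{L_2t}-\Big(L_2+\bar c\frac{L_2^2}{L_1\sqrt{N_{\max}}}\Big)t-1<0\Big\}.$$ Then $0<\bar t<t^*$, and the functions $H_1(t):=Mt$, $H_\kappa(t):=\int_0^te^{L_2(t-s)}L_1\sqrt{N_{\max}}H_{\kappa-1}(s)\,ds$ ($\kappa\ge2$) satisfy $H_\kappa(t)\le\bar c^{\,\kappa-1}Mt$ for all $t\in[0,\bar t]$ and all $\kappa\ge1$. *)

theory Defs
  imports "HOL-Analysis.Analysis"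
begin

text \<open>The iterated functions H_kappa, indexed by kappa >= 1. The value at index 0 is
  an irrelevant junk value (0).\<close>
fun Hk :: "real \<Rightarrow> real \<Rightarrow> nat \<Rightarrow> real \<Rightarrow> nat \<Rightarrow> real \<Rightarrow> real" where
  "Hk L1 L2 Nmax M 0 t = 0"
| "Hk L1 L2 Nmax M (Suc 0) t = M * t"
| "Hk L1 L2 Nmax M (Suc (Suc k)) t =
     integral {0..t} (\<lambda>s. exp (L2 * (t - s)) * L1 * sqrt (real Nmax) * Hk L1 L2 Nmax M (Suc k) s)"

end

theory Submission imports Defs begin

lemma g_conv:
  fixes a b u l :: real
  assumes "0 \<le> l" "l \<le> 1"
  shows "exp (a*(l*u)) - (a+b)*(l*u) - 1 \<le> l * (exp (a*u) - (a+b)*u - 1)"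
proof -
  have "exp ((1-l)*0 + l*(a*u)) \<le> (1-l)*exp 0 + l * exp (a*u)"
    using convex_onD[OF exp_convex, of l 0 "a*u"] assms by simp
  thus ?thesis by (simp add: algebra_simps)
qed

lemma g_pos_after:
  fixes a b tau t :: real
  assumes "tau > 0" "exp (a*tau) - (a+b)*tau - 1 > 0" "t \<ge> tau"
  shows "exp (a*t) - (a+b)*t - 1 > 0"
proof -
  have t0: "t > 0" using assms by simp
  have "exp (a*((tau/t)*t)) - (a+b)*((tau/t)*t) - 1 \<le> (tau/t) * (exp (a*t) - (a+b)*t - 1)"
    by (rule g_conv) (use assms t0 in auto)
  hence "0 < (tau/t) * (exp (a*t) - (a+b)*t - 1)" using assms t0 by simp
  hence "0 < tau * (exp (a*t) - (a+b)*t - 1)" using t0 by (simp add: zero_less_divide_iff)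
  thus ?thesis using assms t0 by (simp add: zero_less_mult_iff)
qed

lemma g_small:
  fixes a b :: real
  assumes "a > 0" "b > 0"
  shows "\<exists>t>0. exp (a*t) - (a+b)*t - 1 < 0"
proof -
  define t where "t = min (1/a) (b/a^2) / 2"
  have t0: "t > 0" using assms by (simp add: t_def)
  have "t \<le> (1/a)/2" by (simp add: t_def)
  hence "a*t \<le> a*((1/a)/2)" using assms by (intro mult_left_mono) auto
  hence at1: "a*t \<le> 1" using assms by simp
  have "t \<le> (b/a^2)/2" by (simp add: t_def)
  hence "a^2*t \<le> a^2*((b/a^2)/2)" using assms by (intro mult_left_mono) auto
  hence atb: "a^2*t < b" using assms by simp
  have "exp (a*t) \<le> 1 + a*t + (a*t)^2" using exp_bound[of "a*t"] at1 assms t0 by simp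
  hence "exp (a*t) - (a+b)*t - 1 \<le> t*(a^2*t - b)" by (simp add: algebra_simps power2_eq_square)
  also have "\<dots> < 0" using t0 atb by (simp add: mult_pos_neg)
  finally show ?thesis using t0 by blast
qed

lemma int_formula:
  fixes a t :: real
  assumes "a > 0" "t \<ge> 0"
  shows "((\<lambda>s. exp (a*(t-s)) * s) has_integral (exp (a*t) - 1 - a*t)/a^2) {0..t}"
proof -
  define F where "F s = - exp (a*(t-s)) * s / a - exp (a*(t-s)) / a^2" for s
  have "((\<lambda>s. exp (a*(t-s)) * s) has_integral (F t - F 0)) {0..t}"
  proof (rule fundamental_theorem_of_calculus[OF assms(2)])
    fix x assume "x \<in> {0..t}"
    have "(F has_real_derivative exp (a*(t-x)) * x) (at x within {0..t})"
      unfolding F_def using assms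
      by (auto intro!: derivative_eq_intros simp: field_simps power2_eq_square)
    thus "(F has_vector_derivative exp (a*(t-x)) * x) (at x within {0..t})"
      by (simp add: has_real_derivative_iff_has_vector_derivative)
  qed
  moreover have "F t - F 0 = (exp (a*t) - 1 - a*t)/a^2"
    unfolding F_def using assms by (simp add: field_simps power2_eq_square)
  ultimately show ?thesis by simp
qed


lemma Hk_rewrite:
  "Hk L1 L2 Nm M (Suc (Suc k)) t =
     exp (L2 * t) * integral {0..t} (\<lambda>s. exp (- (L2 * s)) * L1 * sqrt (real Nm) * Hk L1 L2 Nm M (Suc k) s)"
proof -
  have "Hk L1 L2 Nm M (Suc (Suc k)) t =
     integral {0..t} (\<lambda>s. exp (L2 * t) * (exp (- (L2 * s)) * L1 * sqrt (real Nm) * Hk L1 L2 Nm M (Suc k) s))"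
    by (simp add: right_diff_distrib exp_diff exp_minus field_simps)
  thus ?thesis by (simp add: integral_mult_right)
qed

lemma Hk_cont: "T \<ge> 0 \<Longrightarrow> continuous_on {0..T} (Hk L1 L2 Nm M (Suc k))"
proof (induction k arbitrary: T)
  case 0
  then show ?case by (auto intro!: continuous_intros)
next
  case (Suc k)
  have c: "continuous_on {0..T} (\<lambda>s. exp (- (L2 * s)) * L1 * sqrt (real Nm) * Hk L1 L2 Nm M (Suc k) s)"
    using Suc by (auto intro!: continuous_intros)
  hence "(\<lambda>s. exp (- (L2 * s)) * L1 * sqrt (real Nm) * Hk L1 L2 Nm M (Suc k) s) integrable_on {0..T}"
    by (rule integrable_continuous_real)
  hence "continuous_on {0..T} (\<lambda>t. integral {0..t} (\<lambda>s. exp (- (L2 * s)) * L1 * sqrt (real Nm) * Hk L1 L2 Nm M (Suc k) s))"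
    by (rule indefinite_integral_continuous_1)
  hence "continuous_on {0..T} (\<lambda>t. exp (L2 * t) * integral {0..t} (\<lambda>s. exp (- (L2 * s)) * L1 * sqrt (real Nm) * Hk L1 L2 Nm M (Suc k) s))"
    by (auto intro!: continuous_intros)
  thus ?case by (simp only: Hk_rewrite)
qed


lemma Hk_bound:
  fixes L1 L2 M c r :: real
  assumes L1: "L1 > 0" and L2: "L2 > 0" and Nm: "Nm \<ge> 1" and M: "M > 0" and c: "c > 0"
    and g: "\<forall>t\<in>{0..r}. exp (L2 * t) - (L2 + c * L2\<^sup>2 / (L1 * sqrt (real Nm))) * t - 1 \<le> 0"
  shows "\<forall>t\<in>{0..r}. Hk L1 L2 Nm M (Suc k) t \<le> c ^ k * M * t"
proof (induction k)
  case 0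
  then show ?case by simp
next
  case (Suc k)
  define K where "K = L1 * sqrt (real Nm)"
  have K: "K > 0" using L1 Nm by (simp add: K_def)
  show ?case
  proof
    fix t assume t: "t \<in> {0..r}"
    hence t0: "t \<ge> 0" by simp
    have cH: "continuous_on {0..t} (Hk L1 L2 Nm M (Suc k))" using Hk_cont t0 by blast
    have i1: "(\<lambda>s. exp (L2 * (t - s)) * L1 * sqrt (real Nm) * Hk L1 L2 Nm M (Suc k) s) integrable_on {0..t}"
      by (rule integrable_continuous_real) (use cH in \<open>auto intro!: continuous_intros\<close>)
    have hi: "((\<lambda>s. exp (L2 * (t - s)) * s) has_integral (exp (L2 * t) - 1 - L2 * t)/L2^2) {0..t}"
      by (rule int_formula) (use L2 t0 in auto)
    have hi2: "((\<lambda>s. (c^k * M * K) * (exp (L2 * (t - s)) * s)) has_integral (c^k * M * K) * ((exp (L2 * t) - 1 - L2 * t)/L2^2)) {0..t}"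
      by (rule has_integral_mult_right[OF hi])
    have "Hk L1 L2 Nm M (Suc (Suc k)) t = integral {0..t} (\<lambda>s. exp (L2 * (t - s)) * L1 * sqrt (real Nm) * Hk L1 L2 Nm M (Suc k) s)"
      by simp
    also have "\<dots> \<le> integral {0..t} (\<lambda>s. (c^k * M * K) * (exp (L2 * (t - s)) * s))"
    proof (rule integral_le[OF i1 has_integral_integrable[OF hi2]])
      fix s assume s: "s \<in> {0..t}"
      hence "s \<in> {0..r}" using t by auto
      hence "Hk L1 L2 Nm M (Suc k) s \<le> c ^ k * M * s" using Suc by blast
      moreover have "exp (L2 * (t - s)) * L1 * sqrt (real Nm) \<ge> 0" using L1 by simp
      ultimately have "exp (L2 * (t - s)) * L1 * sqrt (real Nm) * Hk L1 L2 Nm M (Suc k) s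
          \<le> exp (L2 * (t - s)) * L1 * sqrt (real Nm) * (c ^ k * M * s)"
        by (rule mult_left_mono)
      thus "exp (L2 * (t - s)) * L1 * sqrt (real Nm) * Hk L1 L2 Nm M (Suc k) s
          \<le> (c^k * M * K) * (exp (L2 * (t - s)) * s)" by (simp add: K_def algebra_simps)
    qed
    also have "\<dots> = (c^k * M * K) * ((exp (L2 * t) - 1 - L2 * t)/L2^2)"
      using hi2 by (rule integral_unique)
    also have "\<dots> \<le> (c^k * M * K) * (c * t / K)"
    proof (rule mult_left_mono)
      have "exp (L2 * t) - (L2 + c * L2\<^sup>2 / K) * t - 1 \<le> 0" using g t by (simp add: K_def)
      hence "exp (L2 * t) - 1 - L2 * t \<le> c * L2\<^sup>2 * t / K" by (simp add: algebra_simps)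
      thus "(exp (L2 * t) - 1 - L2 * t)/L2^2 \<le> c * t / K" using L2 K
        by (simp add: divide_simps mult.commute mult.left_commute)
      show "0 \<le> c^k * M * K" using c M K by simp
    qed
    also have "\<dots> = c ^ Suc k * M * t" using K by (simp add: field_simps)
    finally show "Hk L1 L2 Nm M (Suc (Suc k)) t \<le> c ^ Suc k * M * t" .
  qed
qed


theorem mainTheorem6:
  fixes L1 L2 M cbar tstar :: real and Nmax :: nat
  assumes "L1 > 0" and "L2 > 0" and "Nmax \<ge> 1" and "M > 0"
    and "0 < cbar" and "cbar < 1"
    and "tstar > 0"
    and "exp (L2 * tstar) - (L2 + L2\<^sup>2 / (L1 * sqrt (real Nmax))) * tstar - 1 = 0"
    and "\<forall>t>0. exp (L2 * t) - (L2 + L2\<^sup>2 / (L1 * sqrt (real Nmax))) * t - 1 = 0 \<longrightarrow> t = tstar"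
  shows "0 < Sup {t. t > 0 \<and> exp (L2 * t) - (L2 + cbar * L2\<^sup>2 / (L1 * sqrt (real Nmax))) * t - 1 < 0}
       \<and> Sup {t. t > 0 \<and> exp (L2 * t) - (L2 + cbar * L2\<^sup>2 / (L1 * sqrt (real Nmax))) * t - 1 < 0} < tstar
       \<and> (\<forall>\<kappa>\<ge>1. \<forall>t\<in>{0..Sup {t. t > 0 \<and> exp (L2 * t) - (L2 + cbar * L2\<^sup>2 / (L1 * sqrt (real Nmax))) * t - 1 < 0}}.
             Hk L1 L2 Nmax M \<kappa> t \<le> cbar ^ (\<kappa> - 1) * M * t)"
proof -
  define b where "b = cbar * L2\<^sup>2 / (L1 * sqrt (real Nmax))"
  define g where "g t = exp (L2 * t) - (L2 + b) * t - 1" for t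
  define S where "S = {t. t > 0 \<and> g t < 0}"
  define r where "r = Sup S"
  have K: "L1 * sqrt (real Nmax) > 0" using assms(1,3) by simp
  have b: "b > 0" unfolding b_def using K assms(2,5) by simp
  have gts: "g tstar > 0"
  proof -
    have bl: "L2\<^sup>2 / (L1 * sqrt (real Nmax)) > b" unfolding b_def using K assms(2,6)
      by (simp add: divide_strict_right_mono)
    hence "g tstar > exp (L2 * tstar) - (L2 + L2\<^sup>2 / (L1 * sqrt (real Nmax))) * tstar - 1"
      unfolding g_def using mult_strict_right_mono[OF bl assms(7)] by (simp add: algebra_simps)
    thus ?thesis using assms(8) by simp
  qed
  have below: "s < tau" if "s \<in> S" "tau > 0" "g tau > 0" for s tau
  proof (rule ccontr)
    assume "\<not> s < tau"
    hence "g s > 0" using g_pos_after[of tau L2 b s] that unfolding g_def by simp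
    thus False using that unfolding S_def by simp
  qed
  obtain t0 where t0: "t0 > 0" "g t0 < 0" using g_small[OF assms(2) b] unfolding g_def by blast
  have t0S: "t0 \<in> S" using t0 unfolding S_def by simp
  have bdd: "bdd_above S"
  proof (rule bdd_aboveI[of S tstar])
    fix x assume "x \<in> S" thus "x \<le> tstar" using below[OF _ assms(7) gts] by (simp add: less_imp_le)
  qed
  have rpos: "r > 0" using cSup_upper[OF t0S bdd] t0 unfolding r_def by simp
  have Sle: "r \<le> tau" if "tau > 0" "g tau > 0" for tau
    unfolding r_def by (rule cSup_least) (use t0S below[OF _ that] in \<open>auto intro: less_imp_le\<close>)
  have gr: "g r \<le> 0"
  proof (rule ccontr)
    assume "\<not> g r \<le> 0"
    hence pos: "g r > 0" by simp
    have "isCont g r" unfolding g_def by (auto intro!: continuous_intros)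
    hence "g \<midarrow>r\<rightarrow> g r" by (simp add: isCont_def)
    then obtain d where d: "d > 0" "\<forall>x. x \<noteq> r \<and> norm (x - r) < d \<longrightarrow> norm (g x - g r) < g r"
      using pos unfolding LIM_eq by blast
    define tau where "tau = max (r - d/2) (r/2)"
    have "tau > 0" "tau < r" using rpos d by (auto simp: tau_def)
    moreover have "norm (tau - r) < d" using rpos d by (auto simp: tau_def)
    ultimately have "g tau > 0" using d(2)[rule_format, of tau] by auto
    with Sle[OF \<open>tau > 0\<close>] \<open>tau < r\<close> show False by simp
  qed
  have gle: "\<forall>t\<in>{0..r}. g t \<le> 0"
  proof
    fix t assume t: "t \<in> {0..r}"
    show "g t \<le> 0"
    proof (cases "t = 0")
      case True thus ?thesis by (simp add: g_def)
    next
      case False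
      hence "t > 0" using t by simp
      show ?thesis
      proof (rule ccontr)
        assume "\<not> g t \<le> 0"
        hence "r \<le> t" using Sle[OF \<open>t > 0\<close>] by simp
        hence "t = r" using t by simp
        thus False using gr \<open>\<not> g t \<le> 0\<close> by simp
      qed
    qed
  qed
  have rlt: "r < tstar"
    using Sle[OF assms(7) gts] gr gts by (cases "r = tstar") auto
  have Hb: "\<forall>t\<in>{0..r}. Hk L1 L2 Nmax M (Suc k) t \<le> cbar ^ k * M * t" for k
    by (rule Hk_bound[OF assms(1-5)]) (use gle in \<open>simp add: g_def b_def\<close>)
  have main: "\<forall>\<kappa>\<ge>1. \<forall>t\<in>{0..r}. Hk L1 L2 Nmax M \<kappa> t \<le> cbar ^ (\<kappa> - 1) * M * t"
  proof (intro allI impI)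
    fix \<kappa> :: nat assume "\<kappa> \<ge> 1"
    then obtain k where "\<kappa> = Suc k" by (cases \<kappa>) auto
    thus "\<forall>t\<in>{0..r}. Hk L1 L2 Nmax M \<kappa> t \<le> cbar ^ (\<kappa> - 1) * M * t" using Hb[of k] by simp
  qed
  have Seq: "{t. t > 0 \<and> exp (L2 * t) - (L2 + cbar * L2\<^sup>2 / (L1 * sqrt (real Nmax))) * t - 1 < 0} = S"
    unfolding S_def g_def b_def ..
  show ?thesis unfolding Seq r_def[symmetric] using rpos rlt main by blast
qed

end
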